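(* Let $\mathcal{G}_{\mathcal{B}}^M=\{p_b(\mathbf{z}_t\mid\mathbf{z}_{t-1},\dots,\mathbf{z}_{t-M})=\mathcal{N}(\mathbf{z}_t\mid\mathbf{m}(\mathbf{z}_{t-1},\dots,\mathbf{z}_{t-M},b),\boldsymbol{\Sigma}(\mathbf{z}_{t-1},\dots,\mathbf{z}_{t-M},b)):b\in\mathcal{B}\}$ with $\boldsymbol{\Sigma}(\cdot,b)\succ0$, satisfying unique indexing (for all $b\ne b'$ there is a positive-measure $\mathcal{Z}\subset\mathbb{R}^{mM}$ on which pointwise $\mathbf{m}(\cdot,b)\ne\mathbf{m}(\cdot,b')$ or $\boldsymbol{\Sigma}(\cdot,b)\ne\boldsymbol{\Sigma}(\cdot,b')$) and zero-measure intersection of moments: for any $b\ne b'\in\mathcal{B}$ the set $\mathcal{X}_{b,b'}=\{(\mathbf{z}_{t-1},\dots,\mathbf{z}_{t-M})\in\mathbb{R}^{mM}:\mathbf{m}(\cdot,b)=\mathbf{m}(\cdot,b')\text{ and }\boldsymbol{\Sigma}(\cdot,b)=\boldsymbol{\Sigma}(\cdot,b')\text{ at this point}\}$ has Lebesgue measure zero. Then, setting $v_b(\mathbf{z},\mathbf{y}_1,\dots,\mathbf{y}_M):=p_b(\mathbf{z}_t=\mathbf{z}\mid\mathbf{z}_{t-1}=\mathbf{y}_1,\dots,\mathbf{z}_{t-M}=\mathbf{y}_M)$, the family $\{v_b:b\in\mathcal{B}\}$ satisfies (b4): there exists a full-measure set $\mathcal{Y}\subset\mathbb{R}^{mM}$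 such that for all positive-measure sets $\mathcal{Y}'\subset\mathcal{Y}$ and $\mathcal{Z}\subset\mathbb{R}^m$, the family is linearly independent under finite mixtures on $(\mathbf{z},\mathbf{y}_1,\dots,\mathbf{y}_M)\in\mathcal{Z}\times\mathcal{Y}'$.
   Context: Measures are Lebesgue; full measure means null complement. A family is linearly independent under finite mixtures on a set $D$ if every finite subfamily is linearly independent as functions on $D$. *)

theory Defs
  imports "HOL-Analysis.Analysis"
begin

definition pos_def_mat :: "real^'n^'n \<Rightarrow> bool" where
  "pos_def_mat S \<longleftrightarrow> transpose S = S \<and> (\<forall>x. x \<noteq> 0 \<longrightarrow> x \<bullet> (S *v x) > 0)"

definition gauss_density :: "real^'n \<Rightarrow> real^'n \<Rightarrow> real^'n^'n \<Rightarrow> real" where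
  "gauss_density z mu S =
     exp (- (1/2) * ((z - mu) \<bullet> (matrix_inv S *v (z - mu))))
     / sqrt ((2 * pi) ^ CARD('n) * det S)"

definition lin_indep_finite_mixtures :: "'b set \<Rightarrow> ('b \<Rightarrow> 'x \<Rightarrow> real) \<Rightarrow> 'x set \<Rightarrow> bool" where
  "lin_indep_finite_mixtures B v D \<longleftrightarrow>
     (\<forall>F c. finite F \<and> F \<subseteq> B \<and> (\<forall>x\<in>D. (\<Sum>b\<in>F. c b * v b x) = 0) \<longrightarrow> (\<forall>b\<in>F. c b = 0))"

end

theory Submission
  imports Defs "HOL-Complex_Analysis.Complex_Analysis" "HOL-Real_Asymp.Real_Asymp"
begin


lemma exp_quad_to0:
  fixes p q :: real
  assumes "p < 0 \<or> (p = 0 \<and> q < 0)"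
  shows "((\<lambda>t. exp (p * t^2 + q * t)) \<longlongrightarrow> 0) at_top"
  using assms
proof
  assume "p < 0"
  then show ?thesis by real_asymp
next
  assume "p = 0 \<and> q < 0"
  then show ?thesis by real_asymp
qed

lemma lex_max_exists:
  fixes a b :: "'i \<Rightarrow> real"
  assumes "finite F" "F \<noteq> {}"
  shows "\<exists>i0\<in>F. \<forall>j\<in>F. a j < a i0 \<or> (a j = a i0 \<and> b j \<le> b i0)"
proof -
  define A where "A = Max (a ` F)"
  have A: "A \<in> a ` F" "\<forall>j\<in>F. a j \<le> A" using assms by (auto simp: A_def)
  define F' where "F' = {j\<in>F. a j = A}"
  have F': "finite F'" "F' \<noteq> {}" using assms A by (auto simp: F'_def)
  define Bm where "Bm = Max (b ` F')"
  have "Bm \<in> b ` F'" "\<forall>j\<in>F'. b j \<le> Bm" using F' by (auto simp: Bm_def)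
  then obtain i0 where "i0 \<in> F'" "b i0 = Bm" by auto
  then show ?thesis using A \<open>\<forall>j\<in>F'. b j \<le> Bm\<close>
    by (auto simp: F'_def) (metis order_le_less)
qed

lemma exp_quad_indep_R:
  fixes a b c :: "'i \<Rightarrow> real"
  assumes "finite F" "inj_on (\<lambda>i. (a i, b i)) F"
    and "\<forall>t. (\<Sum>i\<in>F. c i * exp (a i * t^2 + b i * t)) = 0"
  shows "\<forall>i\<in>F. c i = 0"
  using assms
proof (induction F rule: finite_psubset_induct)
  case (psubset F)
  show ?case
  proof (cases "F = {}")
    case True then show ?thesis by simp
  next
    case False
    obtain i0 where i0: "i0 \<in> F" "\<forall>j\<in>F. a j < a i0 \<or> (a j = a i0 \<and> b j \<le> b i0)"
      using lex_max_exists[OF psubset.hyps False] by blast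
    define h where "h t = (\<Sum>j\<in>F. c j * exp ((a j - a i0) * t^2 + (b j - b i0) * t))" for t
    have h0: "h t = 0" for t
    proof -
      have "h t = exp (- (a i0 * t^2 + b i0 * t)) * (\<Sum>i\<in>F. c i * exp (a i * t^2 + b i * t))"
        unfolding h_def sum_distrib_left
        by (rule sum.cong) (auto simp: exp_add[symmetric] algebra_simps)
      then show ?thesis using psubset.prems(2) by simp
    qed
    have "(h \<longlongrightarrow> (\<Sum>j\<in>F. c j * (if j = i0 then 1 else 0))) at_top"
      unfolding h_def
    proof (intro tendsto_intros)
      fix j assume j: "j \<in> F"
      show "((\<lambda>t. exp ((a j - a i0) * t^2 + (b j - b i0) * t)) \<longlongrightarrow> (if j = i0 then 1 else 0)) at_top"
      proof (cases "j = i0")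
        case True then show ?thesis by simp
      next
        case False
        then have "(a j, b j) \<noteq> (a i0, b i0)" using psubset.prems(1) j i0(1) by (auto dest: inj_onD)
        then have "a j - a i0 < 0 \<or> (a j - a i0 = 0 \<and> b j - b i0 < 0)" using i0(2) j by force
        from exp_quad_to0[OF this] False show ?thesis by simp
      qed
    qed
    then have "(h \<longlongrightarrow> c i0) at_top" using i0(1) psubset.hyps by (simp add: if_distrib sum.delta cong: if_cong)
    moreover have "(h \<longlongrightarrow> 0) at_top"
    proof -
      have "h = (\<lambda>_. 0)" using h0 by auto
      then show ?thesis by simp
    qed
    ultimately have ci0: "c i0 = 0" using LIMSEQ_unique tendsto_unique by (metis trivial_limit_at_top_linorder)
    have IH: "\<forall>i\<in>F - {i0}. c i = 0"
    proof (rule psubset.IH)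
      show "F - {i0} \<subset> F" using i0(1) by auto
      show "inj_on (\<lambda>i. (a i, b i)) (F - {i0})" using psubset.prems(1) by (auto intro: inj_on_subset)
      show "\<forall>t. (\<Sum>i\<in>F - {i0}. c i * exp (a i * t^2 + b i * t)) = 0"
        using psubset.prems(2) ci0 i0(1) psubset.hyps by (simp add: sum.remove)
    qed
    then show ?thesis using ci0 by auto
  qed
qed

lemma exp_quad_indep_limpt:
  fixes a b c :: "'i \<Rightarrow> real"
  assumes "finite F" "inj_on (\<lambda>i. (a i, b i)) F"
    and "\<xi> islimpt S"
    and "\<forall>t\<in>S. (\<Sum>i\<in>F. c i * exp (a i * t^2 + b i * t)) = 0"
  shows "\<forall>i\<in>F. c i = 0"
proof (rule exp_quad_indep_R[OF assms(1,2)], rule allI)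
  fix t :: real
  define G where "G w = (\<Sum>i\<in>F. complex_of_real (c i) * exp (of_real (a i) * w^2 + of_real (b i) * w))" for w
  have Gr: "G (of_real s) = of_real (\<Sum>i\<in>F. c i * exp (a i * s^2 + b i * s))" for s
    unfolding G_def by (simp add: exp_of_real[symmetric])
  have hol: "G holomorphic_on UNIV" unfolding G_def by (intro holomorphic_intros)
  obtain f where f: "\<forall>n. f n \<in> S - {\<xi>}" "f \<longlonglongrightarrow> \<xi>"
    using assms(3) islimpt_sequential by blast
  have lim: "complex_of_real \<xi> islimpt (of_real ` S)"
    unfolding islimpt_sequential
    proof (rule exI[of _ "\<lambda>n. of_real (f n)"], intro conjI allI)
    fix n show "complex_of_real (f n) \<in> of_real ` S - {of_real \<xi>}" using f(1)[rule_format, of n] by auto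
  next
    show "(\<lambda>n. complex_of_real (f n)) \<longlonglongrightarrow> of_real \<xi>" using f(2) by (rule tendsto_of_real)
  qed
  have "G (of_real t) = 0"
  proof (rule analytic_continuation[OF hol open_UNIV connected_UNIV subset_UNIV UNIV_I lim _ UNIV_I])
    fix z :: complex assume "z \<in> of_real ` S"
    then obtain s where "s \<in> S" "z = of_real s" by auto
    then show "G z = 0" using Gr[of s] assms(4) by simp
  qed
  then show "(\<Sum>i\<in>F. c i * exp (a i * t^2 + b i * t)) = 0" using Gr[of t] by (metis of_real_eq_0_iff)
qed



lemma line_section:
  fixes B :: "('a::euclidean_space) set" and v :: 'a and N :: "'a set"
  assumes B: "B \<in> sets borel" "emeasure lborel B > 0" and N: "N \<in> null_sets lborel"
  shows "\<exists>x. x \<notin> N \<and> emeasure lborel {t::real. t \<in> {0..1} \<and> x + t *\<^sub>R v \<in> B} > 0"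
proof (rule ccontr)
  assume H: "\<not> ?thesis"
  define f where "f x t = (indicator B (x + t *\<^sub>R v) * indicator {0..1::real} t :: ennreal)" for x t
  have Bm[measurable]: "B \<in> sets borel" by (rule B(1))
  have meas: "case_prod f \<in> borel_measurable (lborel \<Otimes>\<^sub>M lborel)"
    unfolding f_def by measurable
  have Fub: "(\<integral>\<^sup>+ t. (\<integral>\<^sup>+ x. f x t \<partial>lborel) \<partial>lborel) = (\<integral>\<^sup>+ x. (\<integral>\<^sup>+ t. f x t \<partial>lborel) \<partial>lborel)"
    by (rule lborel_pair.Fubini'[OF meas])
  have inner1: "(\<integral>\<^sup>+ x. f x t \<partial>lborel) = indicator {0..1::real} t * emeasure lborel B" for t
  proof -
    have "(\<integral>\<^sup>+ x. f x t \<partial>lborel) = (\<integral>\<^sup>+ x. indicator B (t *\<^sub>R v + x) \<partial>lborel) * indicator {0..1::real} t"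
      unfolding f_def by (subst nn_integral_multc) (auto simp: add.commute)
    also have "(\<integral>\<^sup>+ x. indicator B (t *\<^sub>R v + x) \<partial>lborel) = (\<integral>\<^sup>+ y. indicator B y \<partial>(distr lborel borel ((+) (t *\<^sub>R v))))"
      by (subst nn_integral_distr) auto
    also have "\<dots> = emeasure lborel B" by (simp add: lborel_distr_plus)
    finally show ?thesis by (simp add: mult.commute)
  qed
  have "(\<integral>\<^sup>+ t. (\<integral>\<^sup>+ x. f x t \<partial>lborel) \<partial>lborel) = (\<integral>\<^sup>+ t. emeasure lborel B * indicator {0..1::real} t \<partial>lborel)"
    by (simp add: inner1 mult.commute)
  also have "\<dots> = emeasure lborel B"
    by (subst nn_integral_cmult_indicator) auto
  finally have "(\<integral>\<^sup>+ t. (\<integral>\<^sup>+ x. f x t \<partial>lborel) \<partial>lborel) = emeasure lborel B" .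
  moreover have "(\<integral>\<^sup>+ x. (\<integral>\<^sup>+ t. f x t \<partial>lborel) \<partial>lborel) = 0"
  proof -
    have "AE x in lborel. (\<integral>\<^sup>+ t. f x t \<partial>lborel) = 0"
    proof (rule AE_I'[OF N], safe)
      fix x assume x: "(\<integral>\<^sup>+ t. f x t \<partial>lborel) \<noteq> 0"
      have "(\<integral>\<^sup>+ t. f x t \<partial>lborel) = emeasure lborel {t::real. t \<in> {0..1} \<and> x + t *\<^sub>R v \<in> B}"
      proof -
        have "(\<integral>\<^sup>+ t. f x t \<partial>lborel) = (\<integral>\<^sup>+ t. indicator {t::real. t \<in> {0..1} \<and> x + t *\<^sub>R v \<in> B} t \<partial>lborel)"
          unfolding f_def by (rule nn_integral_cong) (auto simp: indicator_def)
        also have "\<dots> = emeasure lborel {t::real. t \<in> {0..1} \<and> x + t *\<^sub>R v \<in> B}"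
          by (rule nn_integral_indicator) measurable
        finally show ?thesis .
      qed
      then show "x \<in> N" using H x by (metis not_gr_zero)
    qed
    then have "(\<integral>\<^sup>+ x. (\<integral>\<^sup>+ t. f x t \<partial>lborel) \<partial>lborel) = (\<integral>\<^sup>+ x. 0 \<partial>lborel)"
      using nn_integral_cong_AE[of "\<lambda>x. \<integral>\<^sup>+ t. f x t \<partial>lborel" "\<lambda>_. 0" lborel] by simp
    then show ?thesis by simp
  qed
  ultimately show False using B(2) Fub by simp
qed


lemma pd_invertible:
  fixes S :: "real^'n^'n"
  assumes "pos_def_mat S" shows "invertible S"
proof -
  have "\<forall>x. S *v x = 0 \<longrightarrow> x = 0"
  proof (intro allI impI)
    fix x assume "S *v x = 0"
    then show "x = 0" using assms unfolding pos_def_mat_def by (metis inner_zero_right less_irrefl)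
  qed
  then show ?thesis by (simp add: invertible_left_inverse matrix_left_invertible_ker)
qed

lemma matrix_inv_props:
  fixes S :: "real^'n^'n"
  assumes "invertible S"
  shows "S ** matrix_inv S = mat 1" "matrix_inv S ** S = mat 1"
proof -
  have "\<exists>A'. S ** A' = mat 1 \<and> A' ** S = mat 1" using assms by (simp add: invertible_def)
  then have "S ** matrix_inv S = mat 1 \<and> matrix_inv S ** S = mat 1"
    unfolding matrix_inv_def by (rule someI_ex)
  then show "S ** matrix_inv S = mat 1" "matrix_inv S ** S = mat 1" by auto
qed

lemma pd_inv_sym:
  fixes S :: "real^'n^'n"
  assumes "pos_def_mat S" shows "transpose (matrix_inv S) = matrix_inv S"
proof -
  let ?P = "matrix_inv S"
  have inv: "S ** ?P = mat 1" "?P ** S = mat 1" using matrix_inv_props pd_invertible assms by auto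
  have St: "transpose S = S" using assms by (simp add: pos_def_mat_def)
  have "transpose ?P ** S = mat 1"
    by (metis St inv(1) matrix_transpose_mul transpose_mat)
  then have "transpose ?P = (transpose ?P ** S) ** ?P"
    by (metis inv(1) matrix_mul_assoc matrix_mul_rid)
  then show ?thesis using \<open>transpose ?P ** S = mat 1\<close> by simp
qed

lemma matrix_inv_inj:
  fixes S S' :: "real^'n^'n"
  assumes "invertible S" "invertible S'" "matrix_inv S = matrix_inv S'"
  shows "S = S'"
proof -
  have "S = S ** (matrix_inv S' ** S')" using matrix_inv_props(2)[OF assms(2)] by simp
  also have "\<dots> = (S ** matrix_inv S) ** S'" using assms(3) by (simp add: matrix_mul_assoc)
  also have "\<dots> = S'" using matrix_inv_props(1)[OF assms(1)] by simp
  finally show ?thesis .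
qed

lemma matrix_inv_ker:
  fixes S :: "real^'n^'n"
  assumes "invertible S" "matrix_inv S *v w = 0"
  shows "w = 0"
proof -
  have "w = (S ** matrix_inv S) *v w" using matrix_inv_props(1)[OF assms(1)] by simp
  also have "\<dots> = S *v (matrix_inv S *v w)" by (simp add: matrix_vector_mul_assoc)
  finally show ?thesis using assms(2) by simp
qed

lemma sym_dot:
  fixes P :: "real^'n^'n"
  assumes "transpose P = P"
  shows "u \<bullet> (P *v w) = w \<bullet> (P *v u)"
proof -
  have "u \<bullet> (P *v w) = (u v* P) \<bullet> w" by (simp add: dot_lmul_matrix)
  also have "\<dots> = (transpose P *v u) \<bullet> w" by simp
  also have "\<dots> = w \<bullet> (P *v u)" using assms by (simp add: inner_commute)
  finally show ?thesis .
qed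

lemma quad_line:
  fixes P :: "real^'n^'n"
  assumes "transpose P = P"
  shows "(w + t *\<^sub>R v) \<bullet> (P *v (w + t *\<^sub>R v)) =
         w \<bullet> (P *v w) + 2 * t * (v \<bullet> (P *v w)) + t^2 * (v \<bullet> (P *v v))"
proof -
  have "(w + t *\<^sub>R v) \<bullet> (P *v (w + t *\<^sub>R v)) =
        w \<bullet> (P *v w) + t * (w \<bullet> (P *v v)) + t * (v \<bullet> (P *v w)) + t * t * (v \<bullet> (P *v v))"
    by (simp add: matrix_vector_right_distrib matrix_vector_mult_scaleR inner_add_left inner_add_right algebra_simps)
  then show ?thesis using sym_dot[OF assms, of w v] by (simp add: power2_eq_square algebra_simps)
qed


theorem proposition6:
  fixes B :: "'b set"
    and mu :: "(real^'m)^'k \<Rightarrow> 'b \<Rightarrow> real^'m"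
    and Sig :: "(real^'m)^'k \<Rightarrow> 'b \<Rightarrow> real^'m^'m"
  assumes pd: "\<And>y b. b \<in> B \<Longrightarrow> pos_def_mat (Sig y b)"
    and unique_idx: "\<And>b b'. b \<in> B \<Longrightarrow> b' \<in> B \<Longrightarrow> b \<noteq> b' \<Longrightarrow>
          \<exists>Z. Z \<in> sets lebesgue \<and> emeasure lebesgue Z > 0 \<and>
              (\<forall>y\<in>Z. mu y b \<noteq> mu y b' \<or> Sig y b \<noteq> Sig y b')"
    and zero_meas: "\<And>b b'. b \<in> B \<Longrightarrow> b' \<in> B \<Longrightarrow> b \<noteq> b' \<Longrightarrow>
          {y. mu y b = mu y b' \<and> Sig y b = Sig y b'} \<in> null_sets lebesgue"
  shows "\<exists>Y. Y \<in> sets lebesgue \<and> UNIV - Y \<in> null_sets (lebesgue :: ((real^'m)^'k) measure) \<and>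
           (\<forall>Y' Z. Y' \<subseteq> Y \<and> Y' \<in> sets lebesgue \<and> emeasure lebesgue Y' > 0 \<and>
                   Z \<in> sets (lebesgue :: (real^'m) measure) \<and> emeasure lebesgue Z > 0 \<longrightarrow>
              lin_indep_finite_mixtures B
                (\<lambda>b (z, y). gauss_density z (mu y b) (Sig y b)) (Z \<times> Y'))"
proof -
  have main: "lin_indep_finite_mixtures B (\<lambda>b (z, y). gauss_density z (mu y b) (Sig y b)) (Z \<times> Y')"
    if Y'm: "Y' \<in> sets lebesgue" "emeasure lebesgue Y' > 0"
      and Zm: "Z \<in> sets (lebesgue :: (real^'m) measure)" "emeasure lebesgue Z > 0"
    for Y' :: "((real^'m)^'k) set" and Z :: "(real^'m) set"
    unfolding lin_indep_finite_mixtures_def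
  proof (intro allI impI)
    fix F c
    assume asm: "finite F \<and> F \<subseteq> B \<and> (\<forall>x\<in>Z \<times> Y'. (\<Sum>b\<in>F. c b * (case x of (z, y) \<Rightarrow> gauss_density z (mu y b) (Sig y b))) = 0)"
    then have F: "finite F" "F \<subseteq> B" by auto
    have H: "(\<Sum>b\<in>F. c b * gauss_density z (mu y b) (Sig y b)) = 0" if "z \<in> Z" "y \<in> Y'" for z y
      using asm that by auto
    define Pairs where "Pairs = {p\<in>F\<times>F. fst p \<noteq> snd p}"
    have finP: "finite Pairs" unfolding Pairs_def using F(1) by (auto intro: finite_subset[of _ "F\<times>F"])
    define BadY where "BadY = (\<Union>p\<in>Pairs. {y. mu y (fst p) = mu y (snd p) \<and> Sig y (fst p) = Sig y (snd p)})"
    have BadY: "BadY \<in> null_sets lebesgue" unfolding BadY_def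
    proof (rule null_sets_UN')
      show "countable Pairs" using finP by (rule countable_finite)
    next
      fix p assume "p \<in> Pairs"
      then show "{y. mu y (fst p) = mu y (snd p) \<and> Sig y (fst p) = Sig y (snd p)} \<in> null_sets lebesgue"
        using F(2) by (intro zero_meas) (auto simp: Pairs_def)
    qed
    obtain y where y: "y \<in> Y'" "y \<notin> BadY"
    proof -
      have "\<not> Y' \<subseteq> BadY"
      proof
        assume "Y' \<subseteq> BadY"
        then have "Y' \<in> null_sets lebesgue" using null_sets_subset[OF BadY Y'm(1)] by simp
        then show False using Y'm(2) by (auto dest: null_setsD1)
      qed
      then show ?thesis using that by auto
    qed
    define m where "m b = mu y b" for b
    define S where "S b = Sig y b" for b
    define P where "P b = matrix_inv (S b)" for b
    have Sinv: "invertible (S b)" if "b \<in> F" for b using pd F(2) that pd_invertible unfolding S_def by blast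
    have Psym: "transpose (P b) = P b" if "b \<in> F" for b using pd F(2) that pd_inv_sym unfolding S_def P_def by blast
    have dist: "m (fst p) \<noteq> m (snd p) \<or> S (fst p) \<noteq> S (snd p)" if "p \<in> Pairs" for p
      using y(2) that unfolding BadY_def m_def S_def by auto
    obtain Bz where Bz: "Bz \<in> sets borel" "Bz \<subseteq> Z" "emeasure lborel Bz > 0"
    proof -
      obtain Sb Nn N' where SN: "Z = Sb \<union> Nn" "Nn \<subseteq> N'" "N' \<in> null_sets lborel" "Sb \<in> sets lborel"
        using sets_completionE[OF Zm(1)] by metis
      have "emeasure lborel Sb > 0"
      proof (rule ccontr)
        assume "\<not> emeasure lborel Sb > 0"
        then have "Sb \<in> null_sets lborel" using SN(4) by (simp add: null_sets_def)
        then have "Sb \<union> N' \<in> null_sets lborel" using SN(3) by auto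
        then have "Sb \<union> N' \<in> null_sets lebesgue" by (simp add: null_sets_completionI)
        then have "Z \<in> null_sets lebesgue" using SN Zm(1) null_sets_subset by (metis Un_mono order_refl)
        then show False using Zm(2) by (auto dest: null_setsD1)
      qed
      then show ?thesis using that SN by auto
    qed
    define u where "u v p = (P (fst p) - P (snd p)) *v v" for v p
    define k where "k v p = v \<bullet> (P (fst p) *v m (fst p) - P (snd p) *v m (snd p))" for v p
    have exA: "\<exists>a. a \<noteq> 0 \<and> (\<forall>v. a \<bullet> v \<noteq> 0 \<longrightarrow> u v p \<noteq> 0 \<or> k v p \<noteq> 0)" if p: "p \<in> Pairs" for p
    proof (cases "P (fst p) = P (snd p)")
      case False
      then obtain i where i: "P (fst p) $ i \<noteq> P (snd p) $ i" by (auto simp: vec_eq_iff)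
      show ?thesis
      proof (rule exI[of _ "(P (fst p) - P (snd p)) $ i"], intro conjI allI impI)
        show "(P (fst p) - P (snd p)) $ i \<noteq> 0" using i by simp
        fix v assume "(P (fst p) - P (snd p)) $ i \<bullet> v \<noteq> 0"
        then have "u v p $ i \<noteq> 0" unfolding u_def by (simp add: matrix_vector_mul_component)
        then show "u v p \<noteq> 0 \<or> k v p \<noteq> 0" by auto
      qed
    next
      case True
      have pF: "fst p \<in> F" "snd p \<in> F" using p by (auto simp: Pairs_def)
      have "S (fst p) = S (snd p)" using matrix_inv_inj[OF Sinv[OF pF(1)] Sinv[OF pF(2)]] True by (simp add: P_def)
      then have mne: "m (fst p) - m (snd p) \<noteq> 0" using dist[OF p] by auto
      define a where "a = P (fst p) *v (m (fst p) - m (snd p))"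
      have "a \<noteq> 0" using matrix_inv_ker[OF Sinv[OF pF(1)]] mne unfolding a_def P_def by blast
      moreover have "k v p = a \<bullet> v" for v
        unfolding k_def a_def using True by (simp add: matrix_vector_mult_diff_distrib inner_commute)
      ultimately show ?thesis by auto
    qed
    obtain A where A: "\<And>p. p \<in> Pairs \<Longrightarrow> A p \<noteq> 0" "\<And>p v. p \<in> Pairs \<Longrightarrow> A p \<bullet> v \<noteq> 0 \<Longrightarrow> u v p \<noteq> 0 \<or> k v p \<noteq> 0"
      using exA by metis
    have negA: "negligible (\<Union>p\<in>Pairs. {v. A p \<bullet> v = 0})"
      by (rule negligible_Union) (use finP A(1) in \<open>auto intro!: negligible_hyperplane\<close>)
    obtain v where v: "\<And>p. p \<in> Pairs \<Longrightarrow> A p \<bullet> v \<noteq> 0"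
    proof -
      have "(\<Union>p\<in>Pairs. {v. A p \<bullet> v = 0}) \<noteq> UNIV" using negA by auto
      then show ?thesis using that by blast
    qed
    have uk: "u v p \<noteq> 0 \<or> k v p \<noteq> 0" if "p \<in> Pairs" for p using A(2)[OF that v[OF that]] .
    define N where "N = (\<Union>p\<in>Pairs. {x. u v p \<bullet> x = k v p})"
    have "negligible N" unfolding N_def
      by (rule negligible_Union) (use finP uk in \<open>auto intro!: negligible_hyperplane\<close>)
    moreover have "closed N" unfolding N_def using finP by (intro closed_UN) (auto intro: closed_hyperplane)
    ultimately have Nnull: "N \<in> null_sets lborel"
      by (simp add: negligible_iff_null_sets null_sets_completion_iff borel_closed)
    obtain x where x: "x \<notin> N" "emeasure lborel {t::real. t \<in> {0..1} \<and> x + t *\<^sub>R v \<in> Bz} > 0"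
      using line_section[OF Bz(1,3) Nnull, of v] by blast
    define T where "T = {t::real. t \<in> {0..1} \<and> x + t *\<^sub>R v \<in> Bz}"
    have "infinite T"
    proof
      assume "finite T"
      then have "T \<in> null_sets lborel" by (rule finite_imp_null_set_lborel)
      then show False using x(2) unfolding T_def by (auto dest: null_setsD1)
    qed
    obtain \<xi> where \<xi>: "\<xi> islimpt T"
    proof -
      have "\<not> (\<forall>z. z \<in> {0..1::real} \<longrightarrow> \<not> z islimpt T)"
      proof
        assume "\<forall>z. z \<in> {0..1::real} \<longrightarrow> \<not> z islimpt T"
        then have "finite ({0..1} \<inter> T)" by (intro finite_not_islimpt_in_compact) auto
        moreover have "{0..1} \<inter> T = T" unfolding T_def by auto
        ultimately show False using \<open>infinite T\<close> by simp
      qed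
      then show ?thesis using that by blast
    qed
    define al where "al b = -(1/2) * (v \<bullet> (P b *v v))" for b
    define be where "be b = -(v \<bullet> (P b *v (x - m b)))" for b
    define ga where "ga b = -(1/2) * ((x - m b) \<bullet> (P b *v (x - m b)))" for b
    define sK where "sK b = sqrt ((2*pi)^CARD('m) * det (S b))" for b
    define d where "d b = c b * exp (ga b) / sK b" for b
    have sK0: "sK b \<noteq> 0" if "b \<in> F" for b
      using Sinv[OF that] by (simp add: sK_def invertible_det_nz)
    have gl: "gauss_density (x + t *\<^sub>R v) (m b) (S b) = exp (ga b) / sK b * exp (al b * t^2 + be b * t)"
      if "b \<in> F" for b t
    proof -
      have eq: "x + t *\<^sub>R v - m b = (x - m b) + t *\<^sub>R v" by simp
      have "-(1/2) * ((x + t *\<^sub>R v - m b) \<bullet> (P b *v (x + t *\<^sub>R v - m b))) = ga b + (al b * t^2 + be b * t)"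
        unfolding eq quad_line[OF Psym[OF that]] al_def be_def ga_def by (simp add: algebra_simps)
      then show ?thesis
        unfolding gauss_density_def P_def sK_def by (simp add: exp_add)
    qed
    have zero: "\<forall>t\<in>T. (\<Sum>b\<in>F. d b * exp (al b * t^2 + be b * t)) = 0"
    proof
      fix t assume "t \<in> T"
      then have "x + t *\<^sub>R v \<in> Z" using Bz(2) unfolding T_def by auto
      then have "(\<Sum>b\<in>F. c b * gauss_density (x + t *\<^sub>R v) (m b) (S b)) = 0"
        using H[OF _ y(1)] unfolding m_def S_def by blast
      moreover have "(\<Sum>b\<in>F. c b * gauss_density (x + t *\<^sub>R v) (m b) (S b)) = (\<Sum>b\<in>F. d b * exp (al b * t^2 + be b * t))"
        by (rule sum.cong) (auto simp: gl d_def)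
      ultimately show "(\<Sum>b\<in>F. d b * exp (al b * t^2 + be b * t)) = 0" by simp
    qed
    have inj: "inj_on (\<lambda>b. (al b, be b)) F"
    proof (rule inj_onI, rule ccontr)
      fix b b' assume bb: "b \<in> F" "b' \<in> F" "(al b, be b) = (al b', be b')" "b \<noteq> b'"
      then have p: "(b, b') \<in> Pairs" by (simp add: Pairs_def)
      have "u v (b, b') \<bullet> x = v \<bullet> (P b *v x) - v \<bullet> (P b' *v x)"
        unfolding u_def using sym_dot[OF Psym[OF bb(1)], of x v] sym_dot[OF Psym[OF bb(2)], of x v]
        by (simp add: matrix_vector_mult_diff_rdistrib inner_diff_left inner_commute[of "P _ *v v" x])
      also have "\<dots> = k v (b, b')"
        using bb(3) unfolding k_def be_def by (simp add: matrix_vector_mult_diff_distrib inner_diff_right)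
      finally have "x \<in> N" using p unfolding N_def by auto
      then show False using x(1) by simp
    qed
    have d0: "\<forall>b\<in>F. d b = 0" by (rule exp_quad_indep_limpt[OF F(1) inj \<xi> zero])
    show "\<forall>b\<in>F. c b = 0"
    proof
      fix b assume "b \<in> F"
      then show "c b = 0" using d0 sK0[of b] by (force simp: d_def)
    qed
  qed
  show ?thesis
    by (rule exI[of _ UNIV]) (auto intro: main)
qed

end
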